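(* Let $G=(G_i,P_i)_{i\in I}$ be a qualitative game and let $R^0,R^1,R^2,\dots$ (a finite or countably infinite sequence) be pairings of $G$ with $R^0=G$ and $R^t\to R^{t+1}$ fast for each $t$. Then for each $t$, if Condition $C(t)$ holds, Condition $D(t)$ holds.
   Context: $I$ is a nonempty set of players. A qualitative game $G=(G_i,P_i)_{i\in I}$ consists of nonempty sets $G_i$ (subsets of topological vector spaces) and correspondences $P_i:\prod_{j\in I}G_j\to 2^{G_i}$. Write $G_{-i}=\prod_{j\neq i}G_j$ and $x=(x_i,x_{-i})$. A pairing of $G$ is a family $H=(H_i)_{i\in I}$ with $H_i\subseteq G_i$ (the $P_i$ being restricted to $\prod_j H_j$); $H_{-i}=\prod_{j\ne i}H_j$. For pairings $R,S$ of $G$ with $S_i\subseteq R_i$ for all $i$, $R\to S$ means: for every $i$ and every $x_i\in R_i\setminus S_i$, $\bigcap_{x_{-i}\in R_{-i}}P_i(x_i,x_{-i})\neq\emptyset$; the reduction $R\to S$ is fast if in addition, for every $i$ and $x_i\in R_i$, $\bigcap_{x_{-i}\in R_{-i}}P_i(x_i,x_{-i})\neq\emptyset$ implies $x_i\notin S_i$. Condition $C(t)$: for all $i\in I$ and all $x_i\in G_i$, if $R^t_{-i}\neq\emptyset$ and there is $y_i\in G_i$ with $y_i\in P_i(x_i,x_{-i})$ for all $x_{-i}\in R^t_{-i}$, then there is $x_i^*\in G_i$ with $x_i^*\in P_i(x_i,x_{-i})$ for all $x_{-i}\in R^t_{-i}$ and $\bigcap_{x_{-i}\in R^t_{-i}}P_i(x_i^*,x_{-i})=\emptyset$.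 Condition $D(t)$: for all $i\in I$ and all $x_i\in G_i$, if $R^t_{-i}\neq\emptyset$ and $\bigcap_{x_{-i}\in R^t_{-i}}P_i(x_i,x_{-i})\neq\emptyset$, then $\bigcap_{x_{-i}\in R^t_{-i}}P_i(x_i,x_{-i})\cap R^t_i\neq\emptyset$. *)

theory Defs
  imports "HOL-Library.FuncSet" "HOL-Library.Extended_Nat"
begin

text \<open>Strategy profiles are functions from players to strategies (a common strategy type 'a);
  a product of strategy sets is PiE.  Profiles of the other players are PiE over I - {i},
  and (x_i, x_{-i}) is the update xmi(i := xi).\<close>

definition others :: "'i set \<Rightarrow> ('i \<Rightarrow> 'a set) \<Rightarrow> 'i \<Rightarrow> ('i \<Rightarrow> 'a) set" where
  "others I H i = PiE (I - {i}) H"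

definition common_pref ::
  "'i set \<Rightarrow> ('i \<Rightarrow> ('i \<Rightarrow> 'a) \<Rightarrow> 'a set) \<Rightarrow> ('i \<Rightarrow> 'a set) \<Rightarrow> 'i \<Rightarrow> 'a \<Rightarrow> 'a set" where
  "common_pref I P H i xi = (\<Inter>xmi \<in> others I H i. P i (xmi(i := xi)))"

definition qual_game ::
  "'i set \<Rightarrow> ('i \<Rightarrow> 'a set) \<Rightarrow> ('i \<Rightarrow> ('i \<Rightarrow> 'a) \<Rightarrow> 'a set) \<Rightarrow> bool" where
  "qual_game I G P \<longleftrightarrow> I \<noteq> {} \<and> (\<forall>i\<in>I. G i \<noteq> {}) \<and>
     (\<forall>i\<in>I. \<forall>x\<in>PiE I G. P i x \<subseteq> G i)"

definition pairing :: "'i set \<Rightarrow> ('i \<Rightarrow> 'a set) \<Rightarrow> ('i \<Rightarrow> 'a set) \<Rightarrow> bool" where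
  "pairing I G H \<longleftrightarrow> (\<forall>i\<in>I. H i \<subseteq> G i)"

definition reduces ::
  "'i set \<Rightarrow> ('i \<Rightarrow> ('i \<Rightarrow> 'a) \<Rightarrow> 'a set) \<Rightarrow> ('i \<Rightarrow> 'a set) \<Rightarrow> ('i \<Rightarrow> 'a set) \<Rightarrow> bool" where
  "reduces I P R S \<longleftrightarrow> (\<forall>i\<in>I. S i \<subseteq> R i) \<and>
     (\<forall>i\<in>I. \<forall>xi\<in>R i - S i. common_pref I P R i xi \<noteq> {})"

definition fast_reduces ::
  "'i set \<Rightarrow> ('i \<Rightarrow> ('i \<Rightarrow> 'a) \<Rightarrow> 'a set) \<Rightarrow> ('i \<Rightarrow> 'a set) \<Rightarrow> ('i \<Rightarrow> 'a set) \<Rightarrow> bool" where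
  "fast_reduces I P R S \<longleftrightarrow> reduces I P R S \<and>
     (\<forall>i\<in>I. \<forall>xi\<in>R i. common_pref I P R i xi \<noteq> {} \<longrightarrow> xi \<notin> S i)"

definition cond_C ::
  "'i set \<Rightarrow> ('i \<Rightarrow> 'a set) \<Rightarrow> ('i \<Rightarrow> ('i \<Rightarrow> 'a) \<Rightarrow> 'a set) \<Rightarrow> ('i \<Rightarrow> 'a set) \<Rightarrow> bool" where
  "cond_C I G P Rt \<longleftrightarrow> (\<forall>i\<in>I. \<forall>xi\<in>G i.
     others I Rt i \<noteq> {} \<and> (\<exists>yi\<in>G i. \<forall>xmi\<in>others I Rt i. yi \<in> P i (xmi(i := xi)))
     \<longrightarrow> (\<exists>xs\<in>G i. (\<forall>xmi\<in>others I Rt i. xs \<in> P i (xmi(i := xi))) \<and>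
                    common_pref I P Rt i xs = {}))"

definition cond_D ::
  "'i set \<Rightarrow> ('i \<Rightarrow> 'a set) \<Rightarrow> ('i \<Rightarrow> ('i \<Rightarrow> 'a) \<Rightarrow> 'a set) \<Rightarrow> ('i \<Rightarrow> 'a set) \<Rightarrow> bool" where
  "cond_D I G P Rt \<longleftrightarrow> (\<forall>i\<in>I. \<forall>xi\<in>G i.
     others I Rt i \<noteq> {} \<and> common_pref I P Rt i xi \<noteq> {}
     \<longrightarrow> common_pref I P Rt i xi \<inter> Rt i \<noteq> {})"

end

theory Submission
  imports Defs
begin

lemma mono_R:
  assumes fast: "\<And>t. enat (Suc t) < N \<Longrightarrow> fast_reduces I P (R t) (R (Suc t))"
  shows "enat t < N \<Longrightarrow> s \<le> t \<Longrightarrow> i \<in> I \<Longrightarrow> R t i \<subseteq> R s i"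
proof (induction t)
  case 0 then show ?case by simp
next
  case (Suc t)
  show ?case
  proof (cases "s = Suc t")
    case False
    hence "s \<le> t" using Suc by simp
    moreover have "enat t < N" using Suc.prems(1)
      by (meson Suc_n_not_le_n enat_ord_simps(1) le_less_trans nat_le_linear order_less_imp_le)
    ultimately have "R t i \<subseteq> R s i" using Suc by blast
    moreover have "R (Suc t) i \<subseteq> R t i" using fast[OF Suc.prems(1)] Suc.prems(3)
      unfolding fast_reduces_def reduces_def by blast
    ultimately show ?thesis by blast
  qed simp
qed

lemma cp_anti:
  assumes "\<forall>i\<in>I. S i \<subseteq> T i"
  shows "common_pref I P T i x \<subseteq> common_pref I P S i x"
proof -
  have "others I S i \<subseteq> others I T i" unfolding others_def using assms
    by (auto simp: PiE_def Pi_def)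
  thus ?thesis unfolding common_pref_def by blast
qed

theorem lemma2:
  fixes I :: "'i set" and G :: "'i \<Rightarrow> 'a set" and P :: "'i \<Rightarrow> ('i \<Rightarrow> 'a) \<Rightarrow> 'a set"
    and R :: "nat \<Rightarrow> 'i \<Rightarrow> 'a set" and N :: enat
  assumes game: "qual_game I G P"
    and len: "0 < N"
    and pair: "\<And>t. enat t < N \<Longrightarrow> pairing I G (R t)"
    and R0: "\<And>i. i \<in> I \<Longrightarrow> R 0 i = G i"
    and fast: "\<And>t. enat (Suc t) < N \<Longrightarrow> fast_reduces I P (R t) (R (Suc t))"
    and t: "enat t < N"
    and C: "cond_C I G P (R t)"
  shows "cond_D I G P (R t)"
  unfolding cond_D_def
proof (intro ballI impI)
  fix i xi assume i: "i \<in> I" and xi: "xi \<in> G i"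
    and h: "others I (R t) i \<noteq> {} \<and> common_pref I P (R t) i xi \<noteq> {}"
  then obtain y where y: "y \<in> common_pref I P (R t) i xi" by blast
  obtain xm where xm: "xm \<in> others I (R t) i" using h by blast
  have sub: "\<forall>j\<in>I. R t j \<subseteq> G j" using pair[OF t] unfolding pairing_def .
  have "xm(i := xi) \<in> PiE I G" using xm sub i xi unfolding others_def
    by (auto simp: PiE_def Pi_def extensional_def)
  hence "P i (xm(i := xi)) \<subseteq> G i" using game i unfolding qual_game_def by blast
  moreover have "y \<in> P i (xm(i := xi))" using y xm unfolding common_pref_def by blast
  ultimately have yG: "y \<in> G i" by blast
  have "\<forall>xmi\<in>others I (R t) i. y \<in> P i (xmi(i := xi))" using y unfolding common_pref_def by blast
  then obtain xs where xsG: "xs \<in> G i" and xsP: "\<forall>xmi\<in>others I (R t) i. xs \<in> P i (xmi(i := xi))"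
    and xse: "common_pref I P (R t) i xs = {}"
    using C i xi h yG unfolding cond_C_def by blast
  have "\<forall>s. s \<le> t \<longrightarrow> xs \<in> R s i"
  proof (intro allI)
    fix s show "s \<le> t \<longrightarrow> xs \<in> R s i"
    proof (induction s)
      case 0 then show ?case using R0 i xsG by simp
    next
      case (Suc s)
      show ?case
      proof
        assume st: "Suc s \<le> t"
        hence xsR: "xs \<in> R s i" using Suc by simp
        have N1: "enat (Suc s) < N" using st t
          by (meson enat_ord_simps(1) le_less_trans)
        have mono: "\<forall>j\<in>I. R t j \<subseteq> R s j" using mono_R[of N I P R, OF fast] t st by simp
        have "common_pref I P (R s) i xs \<subseteq> common_pref I P (R t) i xs"
          by (rule cp_anti[OF mono])
        hence "common_pref I P (R s) i xs = {}" using xse by blast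
        thus "xs \<in> R (Suc s) i" using fast[OF N1] i xsR
          unfolding fast_reduces_def reduces_def by blast
      qed
    qed
  qed
  hence "xs \<in> R t i" by simp
  moreover have "xs \<in> common_pref I P (R t) i xi" using xsP unfolding common_pref_def by blast
  ultimately show "common_pref I P (R t) i xi \<inter> R t i \<noteq> {}" by blast
qed

end
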